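(* Let $G$ be an abelian group and let $(V,Y,\mathbf 1,\omega)$ be a simple vertex operator algebra graded by $G$, $V=\bigoplus_{g\in G}V^g$, such that $V^g\neq 0$ for all $g\in G$ and the fusion rules of the $V^0$-modules $V^g$ satisfy $N_{V^g,V^h}^{V^k}=\delta_{g+h,k}$ for all $g,h,k\in G$. Suppose $(V,\bar Y,\mathbf 1,\omega)$ is also a simple vertex operator algebra on the same underlying vector space, with the same vacuum and Virasoro vector, such that $\bar Y(u,z)=Y(u,z)$ for all $u\in V^0$. Then $(V,Y,\mathbf 1,\omega)$ and $(V,\bar Y,\mathbf 1,\omega)$ are isomorphic vertex operator algebras.
   Context: A vertex operator algebra $V$ is graded by an abelian group $G$ if $V=\bigoplus_{g\in G}V^g$ with $u_nv\in V^{g+h}$ for all $u\in V^g$, $v\in V^h$, $n\in\mathbb Z$ (where $Y(u,z)=\sum_n u_nz^{-n-1}$); then $V^0$ is a vertex operator subalgebra and each $V^g$ is a $V^0$-module. For weak modules $W_1,W_2,W_3$ of a vertex operator algebra $U$, an intertwining operator of type $\binom{W_3}{W_1\,W_2}$ is a linear map $I:W_1\to(\mathrm{Hom}(W_2,W_3))\{z\}$, $w\mapsto I(w,z)$ (formal series with complex powers of $z$), such that $I(w_1,z)w_2\in W_3\{z\}$, $[L(-1),I(w_1,z)]=\frac{d}{dz}I(w_1,z)$, and the Jacobi identity $z_0^{-1}\delta\!\left(\frac{z_1-z_2}{z_0}\right)Y(v,z_1)I(w_1,z_2)-z_0^{-1}\delta\!\left(\frac{z_2-z_1}{-z_0}\right)I(w_1,z_2)Y(v,z_1)=z_2^{-1}\delta\!\left(\frac{z_1-z_0}{z_2}\right)I(Y(v,z_0)w_1,z_2)$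 holds for $v\in U$. The fusion rule $N_{W_1,W_2}^{W_3}$ is the dimension of the space of such intertwining operators. *)

theory Defs
  imports Complex_Main "HOL-Library.Groups_Big_Fun"
begin

context
  fixes sc :: "complex \<Rightarrow> 'v::ab_group_add \<Rightarrow> 'v"  (infixr \<open>*\<^sub>C\<close> 75)
begin

text \<open>A vertex operator is
  encoded by its modes: Y u n v is u_n v, where Y(u,z) = sum_n u_n z^(-n-1).
  L(n) = omega_(n+1). An intertwining operator I of type (W3; W1 W2) is encoded by
  its modes with complex index: I w a x is w_(a) x, where
  I(w,z) = sum_a w_(a) z^(-a-1); it is normalised to be 0 outside W1 x W2.\<close>

definition clin :: "('v \<Rightarrow> 'v) \<Rightarrow> bool" where
  "clin f \<longleftrightarrow> (\<forall>a b x y. f (a *\<^sub>C x + b *\<^sub>C y) = a *\<^sub>C f x + b *\<^sub>C f y)"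

definition clin_on :: "'v set \<Rightarrow> ('v \<Rightarrow> 'v) \<Rightarrow> bool" where
  "clin_on A f \<longleftrightarrow> (\<forall>a b x y. x \<in> A \<longrightarrow> y \<in> A \<longrightarrow> f (a *\<^sub>C x + b *\<^sub>C y) = a *\<^sub>C f x + b *\<^sub>C f y)"

definition csubspace :: "'v set \<Rightarrow> bool" where
  "csubspace A \<longleftrightarrow> 0 \<in> A \<and> (\<forall>a b x y. x \<in> A \<longrightarrow> y \<in> A \<longrightarrow> a *\<^sub>C x + b *\<^sub>C y \<in> A)"

definition fin_dim_C :: "'v set \<Rightarrow> bool" where
  "fin_dim_C A \<longleftrightarrow> (\<exists>S. finite S \<and> A \<subseteq> {\<Sum>s\<in>S. c s *\<^sub>C s | c. True})"

abbreviation Vir :: "('v \<Rightarrow> int \<Rightarrow> 'v \<Rightarrow> 'v) \<Rightarrow> 'v \<Rightarrow> int \<Rightarrow> 'v \<Rightarrow> 'v" where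
  "Vir Y \<omega> n \<equiv> Y \<omega> (n + 1)"

text \<open>Component form (Borcherds identity) of the Jacobi identity for a vertex operator
  Y on a space, acting on w \<in> W, for u,v \<in> U. All sums are finitely supported.\<close>
definition borcherds_on ::
  "('v \<Rightarrow> int \<Rightarrow> 'v \<Rightarrow> 'v) \<Rightarrow> 'v set \<Rightarrow> 'v set \<Rightarrow> bool" where
  "borcherds_on Y U W \<longleftrightarrow>
    (\<forall>u\<in>U. \<forall>v\<in>U. \<forall>w\<in>W. \<forall>m n l :: int.
      Sum_any (\<lambda>i::nat. (of_int m gchoose i :: complex) *\<^sub>C Y (Y u (l + int i) v) (m + n - int i) w)
      = Sum_any (\<lambda>i::nat. ((-1) ^ i * (of_int l gchoose i) :: complex) *\<^sub>C
            (Y u (m + l - int i) (Y v (n + int i) w)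
             - ((-1::complex) powi l) *\<^sub>C Y v (n + l - int i) (Y u (m + int i) w))))"

definition VOA :: "('v \<Rightarrow> int \<Rightarrow> 'v \<Rightarrow> 'v) \<Rightarrow> 'v \<Rightarrow> 'v \<Rightarrow> bool" where
  "VOA Y one \<omega> \<longleftrightarrow>
    (\<forall>u n. clin (Y u n)) \<and> (\<forall>n v. clin (\<lambda>u. Y u n v)) \<and>
    (\<forall>u v. \<exists>N. \<forall>n\<ge>N. Y u n v = 0) \<and>
    (\<forall>n v. Y one n v = (if n = -1 then v else 0)) \<and>
    (\<forall>v n. n \<ge> 0 \<longrightarrow> Y v n one = 0) \<and> (\<forall>v. Y v (-1) one = v) \<and>
    borcherds_on Y UNIV UNIV \<and>
    (\<exists>c::complex. \<forall>m n :: int. \<forall>w.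
       Vir Y \<omega> m (Vir Y \<omega> n w) - Vir Y \<omega> n (Vir Y \<omega> m w)
       = of_int (m - n) *\<^sub>C Vir Y \<omega> (m + n) w
         + (if m + n = 0 then (of_int (m^3 - m) / 12 * c) *\<^sub>C w else 0)) \<and>
    (\<forall>u n. Y (Vir Y \<omega> (-1) u) n = (\<lambda>v. (- of_int n :: complex) *\<^sub>C Y u (n - 1) v)) \<and>
    (\<forall>v. \<exists>f::int \<Rightarrow> 'v. finite {n. f n \<noteq> 0} \<and>
         (\<forall>n. Vir Y \<omega> 0 (f n) = of_int n *\<^sub>C f n) \<and> v = Sum_any f) \<and>
    (\<forall>n::int. fin_dim_C {v. Vir Y \<omega> 0 v = of_int n *\<^sub>C v}) \<and>
    (\<exists>N::int. \<forall>n<N. {v. Vir Y \<omega> 0 v = of_int n *\<^sub>C v} = {0})"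

definition VOA_ideal :: "('v \<Rightarrow> int \<Rightarrow> 'v \<Rightarrow> 'v) \<Rightarrow> 'v set \<Rightarrow> bool" where
  "VOA_ideal Y I \<longleftrightarrow> csubspace I \<and>
     (\<forall>u v n. v \<in> I \<longrightarrow> Y u n v \<in> I \<and> Y v n u \<in> I)"

definition simple_VOA :: "('v \<Rightarrow> int \<Rightarrow> 'v \<Rightarrow> 'v) \<Rightarrow> 'v \<Rightarrow> 'v \<Rightarrow> bool" where
  "simple_VOA Y one \<omega> \<longleftrightarrow> VOA Y one \<omega> \<and>
     (\<forall>I. VOA_ideal Y I \<longrightarrow> I = {0} \<or> I = UNIV)"

definition G_graded ::
  "('v \<Rightarrow> int \<Rightarrow> 'v \<Rightarrow> 'v) \<Rightarrow> 'v \<Rightarrow> 'v \<Rightarrow> ('g::ab_group_add \<Rightarrow> 'v set) \<Rightarrow> bool" where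
  "G_graded Y one \<omega> Vg \<longleftrightarrow>
     (\<forall>g. csubspace (Vg g)) \<and>
     (\<forall>v. \<exists>!f::'g \<Rightarrow> 'v. finite {g. f g \<noteq> 0} \<and> (\<forall>g. f g \<in> Vg g) \<and> v = Sum_any f) \<and>
     (\<forall>g h u v n. u \<in> Vg g \<longrightarrow> v \<in> Vg h \<longrightarrow> Y u n v \<in> Vg (g + h)) \<and>
     one \<in> Vg 0 \<and> \<omega> \<in> Vg 0"

text \<open>Intertwining operators of type (W3; W1 W2) for the vertex operator algebra
  (U, Y restricted, one, omega) and U-modules W1, W2, W3 that are subspaces of V with
  module action given by Y.\<close>
definition intertwining ::
  "('v \<Rightarrow> int \<Rightarrow> 'v \<Rightarrow> 'v) \<Rightarrow> 'v \<Rightarrow> 'v set \<Rightarrow> 'v set \<Rightarrow> 'v set \<Rightarrow> 'v set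
    \<Rightarrow> ('v \<Rightarrow> complex \<Rightarrow> 'v \<Rightarrow> 'v) \<Rightarrow> bool" where
  "intertwining Y \<omega> U W1 W2 W3 I \<longleftrightarrow>
     (\<forall>w a x. (w \<notin> W1 \<or> x \<notin> W2) \<longrightarrow> I w a x = 0) \<and>
     (\<forall>w a x. I w a x \<in> W3) \<and>
     (\<forall>a x. x \<in> W2 \<longrightarrow> clin_on W1 (\<lambda>w. I w a x)) \<and>
     (\<forall>a w. w \<in> W1 \<longrightarrow> clin_on W2 (I w a)) \<and>
     (\<forall>w a x. \<exists>N::nat. \<forall>n\<ge>N. I w (a + of_nat n) x = 0) \<and>
     (\<forall>w\<in>W1. \<forall>x\<in>W2. \<forall>b.
        Vir Y \<omega> (-1) (I w b x) - I w b (Vir Y \<omega> (-1) x) = (- b) *\<^sub>C I w (b - 1) x) \<and>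
     (\<forall>v\<in>U. \<forall>w\<in>W1. \<forall>x\<in>W2. \<forall>m l :: int. \<forall>a :: complex.
      Sum_any (\<lambda>i::nat. (of_int m gchoose i :: complex) *\<^sub>C
                 I (Y v (l + int i) w) (of_int m + a - of_nat i) x)
      = Sum_any (\<lambda>i::nat. ((-1) ^ i * (of_int l gchoose i) :: complex) *\<^sub>C
            (Y v (m + l - int i) (I w (a + of_nat i) x)
             - ((-1::complex) powi l) *\<^sub>C I w (a + of_int l - of_nat i) (Y v (m + int i) x))))"

definition has_dim_C :: "('v \<Rightarrow> complex \<Rightarrow> 'v \<Rightarrow> 'v) set \<Rightarrow> nat \<Rightarrow> bool" where
  "has_dim_C S n \<longleftrightarrow> (\<exists>B. length B = n \<and>
     (\<forall>c. (\<lambda>w a x. \<Sum>i<n. c i *\<^sub>C (B!i) w a x) = (\<lambda>_ _ _. 0) \<longrightarrow> (\<forall>i<n. c i = 0)) \<and>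
     S = {(\<lambda>w a x. \<Sum>i<n. c i *\<^sub>C (B!i) w a x) | c. True})"

definition fusion_rule ::
  "('v \<Rightarrow> int \<Rightarrow> 'v \<Rightarrow> 'v) \<Rightarrow> 'v \<Rightarrow> 'v set \<Rightarrow> 'v set \<Rightarrow> 'v set \<Rightarrow> 'v set \<Rightarrow> nat \<Rightarrow> bool" where
  "fusion_rule Y \<omega> U W1 W2 W3 n \<longleftrightarrow> has_dim_C {I. intertwining Y \<omega> U W1 W2 W3 I} n"

definition VOA_iso ::
  "('v \<Rightarrow> int \<Rightarrow> 'v \<Rightarrow> 'v) \<Rightarrow> 'v \<Rightarrow> 'v \<Rightarrow>
   ('v \<Rightarrow> int \<Rightarrow> 'v \<Rightarrow> 'v) \<Rightarrow> 'v \<Rightarrow> 'v \<Rightarrow> ('v \<Rightarrow> 'v) \<Rightarrow> bool" where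
  "VOA_iso Y1 one1 \<omega>1 Y2 one2 \<omega>2 \<phi> \<longleftrightarrow>
     clin \<phi> \<and> bij \<phi> \<and> \<phi> one1 = one2 \<and> \<phi> \<omega>1 = \<omega>2 \<and>
     (\<forall>u n v. \<phi> (Y1 u n v) = Y2 (\<phi> u) n (\<phi> v))"

end

end

theory Submission
  imports Defs "HOL-Algebra.Group"
begin

lemma complex_root_ex:
  assumes "(c::complex) \<noteq> 0" "n > 0" shows "\<exists>t. t ^ n = c"
proof -
  have "(\<lambda>z. (root n (norm c) * cis (Arg c / n)) * z) ` {z. z ^ n = 1} = {z. z ^ n = c}"
    using bij_betw_imp_surj_on[OF bij_betw_nth_root_unity[OF assms]] by simp
  moreover have "(1::complex) \<in> {z. z ^ n = 1}" by simp
  ultimately show ?thesis by blast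
qed

context comm_group
begin

definition valid_ext :: "'a set \<Rightarrow> ('a \<Rightarrow> complex) \<Rightarrow> ('a \<times> complex) set \<Rightarrow> bool" where
  "valid_ext A r0 R \<longleftrightarrow> (\<forall>x a. (x, a) \<in> R \<longrightarrow> x \<in> carrier G \<and> a \<noteq> 0) \<and>
     (\<forall>x a b. (x, a) \<in> R \<longrightarrow> (x, b) \<in> R \<longrightarrow> a = b) \<and>
     subgroup (Domain R) G \<and>
     (\<forall>x a y b. (x, a) \<in> R \<longrightarrow> (y, b) \<in> R \<longrightarrow> (x \<otimes> y, a * b) \<in> R) \<and>
     (\<forall>x\<in>A. (x, r0 x) \<in> R)"

lemma chain_union_valid:
  assumes C: "C \<in> chains {R. valid_ext A r0 R}" and ne: "C \<noteq> {}"
  shows "valid_ext A r0 (\<Union>C)"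
proof -
  have CV: "\<And>R. R \<in> C \<Longrightarrow> valid_ext A r0 R" using C by (auto simp: chains_def)
  have ch: "\<And>R1 R2. R1 \<in> C \<Longrightarrow> R2 \<in> C \<Longrightarrow> R1 \<subseteq> R2 \<or> R2 \<subseteq> R1"
    using C by (auto simp: chains_def chain_subset_def)
  have two: "\<exists>R\<in>C. p \<in> R \<and> q \<in> R" if "p \<in> \<Union>C" "q \<in> \<Union>C" for p q
    using that ch by blast
  obtain R0 where R0: "R0 \<in> C" using ne by blast
  have sg: "subgroup (Domain (\<Union>C)) G"
  proof
    show "Domain (\<Union>C) \<subseteq> carrier G" using CV unfolding valid_ext_def by blast
    show "\<one> \<in> Domain (\<Union>C)" using CV[OF R0] R0 unfolding valid_ext_def
      by (meson DomainE Domain_mono Sup_upper subgroup.one_closed subsetD)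
    fix x y assume x: "x \<in> Domain (\<Union>C)" and y: "y \<in> Domain (\<Union>C)"
    then obtain a b where "(x, a) \<in> \<Union>C" "(y, b) \<in> \<Union>C" by blast
    then obtain R where R: "R \<in> C" "(x, a) \<in> R" "(y, b) \<in> R" using two by blast
    have "(x \<otimes> y, a * b) \<in> R" using CV[OF R(1)] R unfolding valid_ext_def by blast
    then show "x \<otimes> y \<in> Domain (\<Union>C)" using R(1) by blast
    have "inv x \<in> Domain R" using CV[OF R(1)] R(2) unfolding valid_ext_def
      by (meson Domain.DomainI subgroup.m_inv_closed)
    then show "inv x \<in> Domain (\<Union>C)" using R(1) by blast
  qed
  show ?thesis unfolding valid_ext_def
  proof (intro conjI allI impI ballI)
    fix x a assume "(x, a) \<in> \<Union>C"
    then show "x \<in> carrier G" "a \<noteq> 0" using CV unfolding valid_ext_def by blast+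
  next
    fix x a b assume "(x, a) \<in> \<Union>C" "(x, b) \<in> \<Union>C"
    then obtain R where "R \<in> C" "(x, a) \<in> R" "(x, b) \<in> R" using two by blast
    then show "a = b" using CV unfolding valid_ext_def by blast
  next
    show "subgroup (Domain (\<Union>C)) G" by (rule sg)
  next
    fix x a y b assume "(x, a) \<in> \<Union>C" "(y, b) \<in> \<Union>C"
    then obtain R where "R \<in> C" "(x, a) \<in> R" "(y, b) \<in> R" using two by blast
    then show "(x \<otimes> y, a * b) \<in> \<Union>C" using CV unfolding valid_ext_def by blast
  next
    fix x assume "x \<in> A"
    then show "(x, r0 x) \<in> \<Union>C" using CV[OF R0] R0 unfolding valid_ext_def by blast
  qed
qed

lemma cancel_aux:
  assumes "a \<in> carrier G" "b \<in> carrier G" "c \<in> carrier G" "d \<in> carrier G" "a \<otimes> b = c \<otimes> d"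
  shows "a \<otimes> inv c = d \<otimes> inv b"
proof -
  have "a = (c \<otimes> d) \<otimes> inv b" using inv_solve_right[of a "c \<otimes> d" b] assms by simp
  moreover have "d \<otimes> inv b \<otimes> c = (c \<otimes> d) \<otimes> inv b" using assms by (simp add: m_ac)
  ultimately have "a = d \<otimes> inv b \<otimes> c" by simp
  then show ?thesis using inv_solve_right'[of "d \<otimes> inv b" a c] assms by simp
qed

lemma valid_extD:
  assumes "valid_ext A r0 R"
  shows "(x, a) \<in> R \<Longrightarrow> x \<in> carrier G" "(x, a) \<in> R \<Longrightarrow> a \<noteq> 0"
    "(x, a) \<in> R \<Longrightarrow> (x, b) \<in> R \<Longrightarrow> a = b" "subgroup (Domain R) G"
    "(x, a) \<in> R \<Longrightarrow> (y, b) \<in> R \<Longrightarrow> (x \<otimes> y, a * b) \<in> R" "z \<in> A \<Longrightarrow> (z, r0 z) \<in> R"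
  using assms unfolding valid_ext_def by blast+

lemma ext_step:
  assumes V: "valid_ext A r0 M" and e: "e \<in> carrier G" and ne: "e \<notin> Domain M"
  shows "\<exists>R'. valid_ext A r0 R' \<and> M \<subseteq> R' \<and> R' \<noteq> M"
proof -
  define S where "S = Domain M"
  define r where "r = (\<lambda>x. THE a. (x, a) \<in> M)"
  have sS: "subgroup S G" using valid_extD(4)[OF V] by (simp add: S_def)
  have SG: "x \<in> S \<Longrightarrow> x \<in> carrier G" for x using sS subgroup.subset by blast
  have fn: "(x, a) \<in> M \<Longrightarrow> (x, b) \<in> M \<Longrightarrow> a = b" for x a b by (rule valid_extD(3)[OF V])
  have rM': "(x, a) \<in> M \<Longrightarrow> r x = a" for x a
    unfolding r_def using fn by blast
  have rM: "x \<in> S \<Longrightarrow> (x, r x) \<in> M" for x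
  proof -
    assume "x \<in> S" then obtain a where "(x, a) \<in> M" unfolding S_def by blast
    then show ?thesis using rM' by simp
  qed
  have rnz: "x \<in> S \<Longrightarrow> r x \<noteq> 0" for x using rM valid_extD(2)[OF V] by blast
  have rmul: "x \<in> S \<Longrightarrow> y \<in> S \<Longrightarrow> r (x \<otimes> y) = r x * r y" for x y
    using rM' valid_extD(5)[OF V rM rM] by blast
  have Smul: "x \<in> S \<Longrightarrow> y \<in> S \<Longrightarrow> x \<otimes> y \<in> S" for x y by (rule subgroup.m_closed[OF sS])
  have Sinv: "x \<in> S \<Longrightarrow> inv x \<in> S" for x by (rule subgroup.m_inv_closed[OF sS])
  have S1: "\<one> \<in> S" by (rule subgroup.one_closed[OF sS])
  have r1: "r \<one> = 1"
  proof -
    have "r \<one> = r \<one> * r \<one>" using rmul[OF S1 S1] by simp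
    then show ?thesis using rnz[OF S1] by (metis mult_cancel_left1)
  qed
  have rinv: "x \<in> S \<Longrightarrow> r (inv x) = inverse (r x)" for x
  proof -
    assume x: "x \<in> S"
    have "x \<otimes> inv x = \<one>" using SG[OF x] by simp
    then have "r x * r (inv x) = 1" using rmul[OF x Sinv[OF x]] r1 by simp
    then show ?thesis by (metis inverse_unique)
  qed
  have rpow_nat: "x \<in> S \<Longrightarrow> x [^] (n::nat) \<in> S \<and> r (x [^] n) = r x ^ n" for x n
    by (induction n) (auto simp: S1 r1 Smul rmul SG)
  have rpow: "x \<in> S \<Longrightarrow> x [^] (k::int) \<in> S \<and> r (x [^] k) = r x powi k" for x k
  proof (cases "k \<ge> 0")
    case True
    assume x: "x \<in> S"
    obtain n where "k = int n" using True nonneg_eq_int by blast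
    then show ?thesis using rpow_nat[OF x, of n] by (simp add: int_pow_int)
  next
    case False
    assume x: "x \<in> S"
    obtain n where n: "k = - int n" using False by (metis nonpos_int_cases not_le order_less_imp_le)
    have "x [^] k = inv (x [^] n)" using n int_pow_neg_int SG[OF x] by simp
    then show ?thesis using rpow_nat[OF x, of n] Sinv rinv n by (simp add: power_int_minus)
  qed
  have "\<exists>t. t \<noteq> 0 \<and> (\<forall>k. e [^] k \<in> S \<longrightarrow> t powi k = r (e [^] k))"
  proof (cases "\<exists>k. k \<noteq> 0 \<and> e [^] (k::int) \<in> S")
    case False
    have "\<forall>k. e [^] k \<in> S \<longrightarrow> (1::complex) powi k = r (e [^] k)"
    proof (intro allI impI)
      fix k assume "e [^] (k::int) \<in> S"
      then have "k = 0" using False by blast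
      then show "(1::complex) powi k = r (e [^] k)" using r1 by simp
    qed
    then show ?thesis by (intro exI[of _ 1]) auto
  next
    case True
    then obtain k0 where k0: "k0 \<noteq> 0" "e [^] (k0::int) \<in> S" by blast
    define P where "P = (\<lambda>n::nat. n > 0 \<and> e [^] (int n) \<in> S)"
    have "P (nat \<bar>k0\<bar>)"
    proof (cases "k0 > 0")
      case True then show ?thesis using k0 by (simp add: P_def)
    next
      case False
      have "e [^] (- k0) = inv (e [^] k0)" using int_pow_neg e by simp
      then show ?thesis using k0 False Sinv by (simp add: P_def)
    qed
    define n where "n = (LEAST n. P n)"
    have Pn: "P n" unfolding n_def by (rule LeastI[of P, OF \<open>P (nat \<bar>k0\<bar>)\<close>])
    then have n0: "n > 0" and en: "e [^] (int n) \<in> S" by (auto simp: P_def)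
    obtain t where t: "t ^ n = r (e [^] (int n))" using complex_root_ex[OF rnz[OF en] n0] by blast
    have tnz: "t \<noteq> 0" using t rnz[OF en] n0 by (auto simp: power_0_left)
    have "t powi k = r (e [^] k)" if k: "e [^] k \<in> S" for k
    proof -
      define q where "q = k div int n"
      define m where "m = k mod int n"
      have km: "k = int n * q + m" unfolding q_def m_def by simp
      have m0: "0 \<le> m" "m < int n" using n0 unfolding m_def by simp_all
      have eq: "e [^] k = e [^] (int n * q) \<otimes> e [^] m" using km int_pow_mult e by simp
      have pq: "e [^] (int n * q) = (e [^] (int n)) [^] q" using int_pow_pow e by simp
      have inS: "e [^] (int n * q) \<in> S" using pq rpow[OF en] by simp
      have "e [^] m = inv (e [^] (int n * q)) \<otimes> e [^] k"
        using eq e by (simp add: m_assoc[symmetric])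
      then have "e [^] m \<in> S" using inS k Sinv Smul by simp
      have "m = 0"
      proof (rule ccontr)
        assume "m \<noteq> 0"
        then have "P (nat m)" using m0 \<open>e [^] m \<in> S\<close> by (simp add: P_def)
        then have "n \<le> nat m" unfolding n_def by (rule Least_le)
        then show False using m0 by simp
      qed
      then have "r (e [^] k) = r ((e [^] (int n)) [^] q)" using km pq by simp
      also have "\<dots> = (t ^ n) powi q" using rpow[OF en] t by simp
      also have "\<dots> = t powi k" using km \<open>m = 0\<close> by (simp add: power_int_mult)
      finally show ?thesis by simp
    qed
    then show ?thesis using tnz by blast
  qed
  then obtain t where tnz: "t \<noteq> 0" and tD: "\<And>k. e [^] k \<in> S \<Longrightarrow> t powi k = r (e [^] k)" by blast
  define R' where "R' = {(e [^] k \<otimes> s, t powi k * r s) | k s. s \<in> S}"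
  have ek: "e [^] (k::int) \<in> carrier G" for k using e by simp
  have V': "valid_ext A r0 R'"
    unfolding valid_ext_def
  proof (intro conjI allI impI ballI)
    fix x a assume "(x, a) \<in> R'"
    then obtain k s where "x = e [^] k \<otimes> s" "a = t powi k * r s" "s \<in> S" unfolding R'_def by blast
    then show "x \<in> carrier G" "a \<noteq> 0" using SG ek rnz tnz by auto
  next
    fix x a b assume "(x, a) \<in> R'" "(x, b) \<in> R'"
    then obtain k s k' s' where 1: "x = e [^] k \<otimes> s" "a = t powi k * r s" "s \<in> S"
      and 2: "x = e [^] k' \<otimes> s'" "b = t powi k' * r s'" "s' \<in> S" unfolding R'_def by blast
    have "e [^] k \<otimes> inv (e [^] k') = s' \<otimes> inv s"
      by (rule cancel_aux) (use 1 2 SG ek in auto)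
    moreover have "e [^] (k - k') = e [^] k \<otimes> inv (e [^] k')" using int_pow_diff e by simp
    ultimately have "e [^] (k - k') = s' \<otimes> inv s" by simp
    then have "t powi (k - k') = r s' * inverse (r s)"
      using tD[of "k - k'"] Smul Sinv rmul rinv 1 2 by simp
    moreover have "t powi k = t powi (k - k') * t powi k'" using tnz by (simp add: power_int_add[symmetric])
    ultimately show "a = b" using 1 2 rnz by (simp add: field_simps)
  next
    have D: "Domain R' = {e [^] (k::int) \<otimes> s | k s. s \<in> S}" unfolding R'_def by (auto simp: Domain_iff)
    show "subgroup (Domain R') G"
      unfolding D
    proof
      show "{e [^] (k::int) \<otimes> s | k s. s \<in> S} \<subseteq> carrier G" using SG ek by auto
      show "\<one> \<in> {e [^] (k::int) \<otimes> s | k s. s \<in> S}" using S1 by (intro CollectI exI[of _ 0] exI[of _ \<one>]) simp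
      fix x y assume "x \<in> {e [^] (k::int) \<otimes> s | k s. s \<in> S}" "y \<in> {e [^] (k::int) \<otimes> s | k s. s \<in> S}"
      then obtain k s k' s' where 1: "x = e [^] (k::int) \<otimes> s" "s \<in> S" and 2: "y = e [^] (k'::int) \<otimes> s'" "s' \<in> S" by blast
      have "x \<otimes> y = e [^] (k + k') \<otimes> (s \<otimes> s')"
        using 1 2 SG ek int_pow_mult e by (simp add: m_ac)
      then show "x \<otimes> y \<in> {e [^] (k::int) \<otimes> s | k s. s \<in> S}" using Smul 1 2 by blast
      have "inv x = e [^] (- k) \<otimes> inv s"
        using 1 SG ek int_pow_neg e by (simp add: inv_mult)
      then show "inv x \<in> {e [^] (k::int) \<otimes> s | k s. s \<in> S}" using Sinv 1 by blast
    qed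
  next
    fix x a y b assume "(x, a) \<in> R'" "(y, b) \<in> R'"
    then obtain k s k' s' where 1: "x = e [^] k \<otimes> s" "a = t powi k * r s" "s \<in> S"
      and 2: "y = e [^] k' \<otimes> s'" "b = t powi k' * r s'" "s' \<in> S" unfolding R'_def by blast
    have "x \<otimes> y = e [^] (k + k') \<otimes> (s \<otimes> s')"
      using 1 2 SG ek int_pow_mult e by (simp add: m_ac)
    moreover have "a * b = t powi (k + k') * r (s \<otimes> s')"
      using 1 2 rmul tnz by (simp add: power_int_add)
    ultimately show "(x \<otimes> y, a * b) \<in> R'" unfolding R'_def using Smul 1 2 by blast
  next
    fix x assume x: "x \<in> A"
    then have "(x, r0 x) \<in> M" using V by (simp add: valid_ext_def)
    then have "x \<in> S" "r x = r0 x" using rM' unfolding S_def by auto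
    then show "(x, r0 x) \<in> R'" unfolding R'_def
      by (intro CollectI exI[of _ 0] exI[of _ x]) (simp add: SG)
  qed
  have sub: "M \<subseteq> R'"
  proof
    fix p assume p: "p \<in> M"
    obtain x a where xa: "p = (x, a)" by (cases p)
    then have "x \<in> S" "r x = a" using p rM' unfolding S_def by auto
    then show "p \<in> R'" unfolding R'_def xa
      by (intro CollectI exI[of _ 0] exI[of _ x]) (simp add: SG)
  qed
  have "e \<in> Domain R'"
  proof -
    have "(e [^] (1::int) \<otimes> \<one>, t powi 1 * r \<one>) \<in> R'" unfolding R'_def using S1 by blast
    then show ?thesis using e by (simp add: Domain.DomainI)
  qed
  then have "R' \<noteq> M" using ne by blast
  then show ?thesis using V' sub by blast
qed

lemma hom_extension:
  fixes r0 :: "'a \<Rightarrow> complex"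
  assumes A: "subgroup A G" and hom: "\<forall>x\<in>A. \<forall>y\<in>A. r0 (x \<otimes> y) = r0 x * r0 y"
    and nz: "\<forall>x\<in>A. r0 x \<noteq> 0"
  shows "\<exists>r. (\<forall>x\<in>carrier G. \<forall>y\<in>carrier G. r (x \<otimes> y) = r x * r y) \<and> (\<forall>x\<in>A. r x = r0 x)
     \<and> (\<forall>x\<in>carrier G. r x \<noteq> 0)"
proof -
  define R0 where "R0 = {(x, r0 x) | x. x \<in> A}"
  have AG: "x \<in> A \<Longrightarrow> x \<in> carrier G" for x using A subgroup.subset by blast
  have DR0: "Domain R0 = A" unfolding R0_def by (auto simp: Domain_iff)
  have V0: "valid_ext A r0 R0"
    unfolding valid_ext_def
  proof (intro conjI allI impI ballI)
    fix x a assume "(x, a) \<in> R0"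
    then have "x \<in> A" "a = r0 x" unfolding R0_def by auto
    then show "x \<in> carrier G" "a \<noteq> 0" using AG nz by auto
  next
    fix x a b assume "(x, a) \<in> R0" "(x, b) \<in> R0"
    then show "a = b" unfolding R0_def by auto
  next
    show "subgroup (Domain R0) G" using DR0 A by simp
  next
    fix x a y b assume "(x, a) \<in> R0" "(y, b) \<in> R0"
    then have "x \<in> A" "a = r0 x" "y \<in> A" "b = r0 y" unfolding R0_def by auto
    moreover then have "x \<otimes> y \<in> A" using subgroup.m_closed[OF A] by blast
    ultimately show "(x \<otimes> y, a * b) \<in> R0" unfolding R0_def using hom by auto
  next
    fix x assume "x \<in> A" then show "(x, r0 x) \<in> R0" unfolding R0_def by auto
  qed
  have "\<exists>M\<in>{R. valid_ext A r0 R}. \<forall>X\<in>{R. valid_ext A r0 R}. M \<subseteq> X \<longrightarrow> X = M"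
  proof (rule Zorn_Lemma2, intro ballI)
    fix C assume C: "C \<in> chains {R. valid_ext A r0 R}"
    show "\<exists>U\<in>{R. valid_ext A r0 R}. \<forall>X\<in>C. X \<subseteq> U"
    proof (cases "C = {}")
      case True then show ?thesis using V0 by blast
    next
      case False
      have "valid_ext A r0 (\<Union>C)" by (rule chain_union_valid[OF C False])
      moreover have "\<forall>X\<in>C. X \<subseteq> \<Union>C" by blast
      ultimately show ?thesis by blast
    qed
  qed
  then obtain M where VM: "valid_ext A r0 M" and maxM: "\<And>X. valid_ext A r0 X \<Longrightarrow> M \<subseteq> X \<Longrightarrow> X = M"
    by blast
  have DM: "e \<in> Domain M" if e: "e \<in> carrier G" for e
  proof (rule ccontr)
    assume "e \<notin> Domain M"
    then obtain R' where "valid_ext A r0 R'" "M \<subseteq> R'" "R' \<noteq> M" using ext_step[OF VM e] by blast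
    then show False using maxM by blast
  qed
  define r where "r = (\<lambda>x. THE a. (x, a) \<in> M)"
  have fn: "(x, a) \<in> M \<Longrightarrow> (x, b) \<in> M \<Longrightarrow> a = b" for x a b by (rule valid_extD(3)[OF VM])
  have rM': "(x, a) \<in> M \<Longrightarrow> r x = a" for x a
    unfolding r_def using fn by blast
  have rM: "x \<in> carrier G \<Longrightarrow> (x, r x) \<in> M" for x
  proof -
    assume "x \<in> carrier G" then obtain a where "(x, a) \<in> M" using DM by blast
    then show ?thesis using rM' by simp
  qed
  show ?thesis
  proof (intro exI[of _ r] conjI ballI)
    fix x y assume x: "x \<in> carrier G" and y: "y \<in> carrier G"
    show "r (x \<otimes> y) = r x * r y" using rM' valid_extD(5)[OF VM rM[OF x] rM[OF y]] by blast
  next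
    fix x assume "x \<in> A" then show "r x = r0 x" using rM' valid_extD(6)[OF VM] by blast
  next
    fix x assume "x \<in> carrier G" then show "r x \<noteq> 0" using rM valid_extD(2)[OF VM] by blast
  qed
qed
end

lemma cocycle_trivial:
  fixes c :: "'g::ab_group_add \<Rightarrow> 'g \<Rightarrow> complex"
  assumes nz: "\<And>g h. c g h \<noteq> 0" and c0: "\<And>h. c 0 h = 1" and sym: "\<And>g h. c g h = c h g"
    and coc: "\<And>g h k. c g h * c (g + h) k = c h k * c g (h + k)"
  shows "\<exists>f. (\<forall>g. f g \<noteq> 0) \<and> (\<forall>g h. f (g + h) = c g h * f g * f h)"
proof -
  define E where "E = \<lparr>carrier = {p::complex \<times> 'g. fst p \<noteq> 0},
      mult = (\<lambda>p q. (fst p * fst q * c (snd p) (snd q), snd p + snd q)), one = (1, 0)\<rparr>"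
  have c0': "c g 0 = 1" for g using c0 sym by metis
  have cg: "comm_group E"
  proof (rule comm_groupI)
    fix x y assume "x \<in> carrier E" "y \<in> carrier E"
    then show "x \<otimes>\<^bsub>E\<^esub> y \<in> carrier E" using nz by (simp add: E_def)
  next
    show "\<one>\<^bsub>E\<^esub> \<in> carrier E" by (simp add: E_def)
  next
    fix x y z :: "complex \<times> 'g"
    have "c (snd x) (snd y) * c (snd x + snd y) (snd z) = c (snd y) (snd z) * c (snd x) (snd y + snd z)"
      by (rule coc)
    then show "x \<otimes>\<^bsub>E\<^esub> y \<otimes>\<^bsub>E\<^esub> z = x \<otimes>\<^bsub>E\<^esub> (y \<otimes>\<^bsub>E\<^esub> z)"
      by (simp add: E_def add.assoc mult_ac)
  next
    fix x y :: "complex \<times> 'g"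
    show "x \<otimes>\<^bsub>E\<^esub> y = y \<otimes>\<^bsub>E\<^esub> x" by (simp add: E_def sym add.commute mult.commute)
  next
    fix x :: "complex \<times> 'g"
    show "\<one>\<^bsub>E\<^esub> \<otimes>\<^bsub>E\<^esub> x = x" by (simp add: E_def c0)
  next
    fix x assume x: "x \<in> carrier E"
    define y where "y = (inverse (fst x * c (snd x) (- snd x)), - snd x)"
    have "y \<in> carrier E" "y \<otimes>\<^bsub>E\<^esub> x = \<one>\<^bsub>E\<^esub>"
      using x nz sym[of "snd x" "- snd x"] by (auto simp: E_def y_def field_simps)
    then show "\<exists>y\<in>carrier E. y \<otimes>\<^bsub>E\<^esub> x = \<one>\<^bsub>E\<^esub>" by blast
  qed
  define A where "A = {p::complex \<times> 'g. fst p \<noteq> 0 \<and> snd p = 0}"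
  have sA: "subgroup A E"
  proof -
    interpret comm_group E by (rule cg)
    show ?thesis
    proof
      show "A \<subseteq> carrier E" by (auto simp: A_def E_def)
      fix x y assume "x \<in> A" "y \<in> A"
      then show "x \<otimes>\<^bsub>E\<^esub> y \<in> A" using nz by (auto simp: A_def E_def)
    next
      show "\<one>\<^bsub>E\<^esub> \<in> A" by (simp add: A_def E_def)
    next
      fix x assume x: "x \<in> A"
      then have xc: "x \<in> carrier E" by (auto simp: A_def E_def)
      define y where "y = (inverse (fst x), 0::'g)"
      have yc: "y \<in> carrier E" using x by (auto simp: A_def E_def y_def)
      have "y \<otimes>\<^bsub>E\<^esub> x = \<one>\<^bsub>E\<^esub>" using x c0 by (auto simp: A_def E_def y_def)
      then have "inv\<^bsub>E\<^esub> x = y" using inv_equality[OF _ xc yc] by simp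
      then show "inv\<^bsub>E\<^esub> x \<in> A" using x by (auto simp: A_def y_def)
    qed
  qed
  have "\<exists>r. (\<forall>x\<in>carrier E. \<forall>y\<in>carrier E. r (x \<otimes>\<^bsub>E\<^esub> y) = r x * r y) \<and> (\<forall>x\<in>A. r x = fst x)
     \<and> (\<forall>x\<in>carrier E. r x \<noteq> 0)"
    by (rule comm_group.hom_extension[OF cg sA]) (auto simp: A_def E_def c0)
  then obtain r where rm: "\<And>x y. x \<in> carrier E \<Longrightarrow> y \<in> carrier E \<Longrightarrow> r (x \<otimes>\<^bsub>E\<^esub> y) = r x * r y"
    and rA: "\<And>x. x \<in> A \<Longrightarrow> r x = fst x" and rnz: "\<And>x. x \<in> carrier E \<Longrightarrow> r x \<noteq> 0" by blast
  define F where "F = (\<lambda>g. r (1, g))"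
  have Fnz: "F g \<noteq> 0" for g using rnz by (simp add: F_def E_def)
  have Fm: "F g * F h = c g h * F (g + h)" for g h
  proof -
    have "(1::complex, g) \<otimes>\<^bsub>E\<^esub> (1, h) = (c g h, 0) \<otimes>\<^bsub>E\<^esub> (1, g + h)" by (simp add: E_def c0)
    then have "r ((1::complex, g) \<otimes>\<^bsub>E\<^esub> (1, h)) = r ((c g h, 0) \<otimes>\<^bsub>E\<^esub> (1, g + h))" by simp
    moreover have "r ((1::complex, g) \<otimes>\<^bsub>E\<^esub> (1, h)) = F g * F h"
      unfolding F_def by (rule rm) (simp_all add: E_def)
    moreover have "r ((c g h, 0) \<otimes>\<^bsub>E\<^esub> (1, g + h)) = r (c g h, 0) * F (g + h)"
      unfolding F_def by (rule rm) (simp_all add: E_def nz)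
    moreover have "r (c g h, 0) = c g h" using rA nz by (simp add: A_def)
    ultimately show ?thesis by simp
  qed
  show ?thesis
  proof (intro exI[of _ "\<lambda>g. inverse (F g)"] conjI allI)
    fix g show "inverse (F g) \<noteq> 0" using Fnz by simp
  next
    fix g h
    have "F (g + h) = F g * F h / c g h" using Fm[of g h] nz[of g h] by (simp add: field_simps)
    then show "inverse (F (g + h)) = c g h * inverse (F g) * inverse (F h)"
      using nz[of g h] Fnz by (simp add: field_simps)
  qed
qed

lemma Sum_any_fin: "(\<And>i. i \<ge> N \<Longrightarrow> f i = 0) \<Longrightarrow> Sum_any f = sum f {..<(N::nat)}"
  by (rule Sum_any.expand_superset) (auto simp: not_le[symmetric])

lemma Sum_any_single: "(\<And>i. i \<noteq> k \<Longrightarrow> f i = 0) \<Longrightarrow> Sum_any f = f k"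
proof -
  assume a: "\<And>i. i \<noteq> k \<Longrightarrow> f i = 0"
  have "Sum_any f = sum f {k}" by (rule Sum_any.expand_superset) (use a in auto)
  then show ?thesis by simp
qed

definition dec :: "('g \<Rightarrow> 'v set) \<Rightarrow> 'v \<Rightarrow> 'g \<Rightarrow> 'v::ab_group_add" where
  "dec Vg v = (THE f. finite {g. f g \<noteq> 0} \<and> (\<forall>g. f g \<in> Vg g) \<and> v = Sum_any f)"

lemma fin_bound: "(\<And>i. i \<ge> K \<Longrightarrow> f i = 0) \<Longrightarrow> finite {i::nat. f i \<noteq> 0}"
  by (rule finite_subset[of _ "{..<K}"]) (auto simp: not_le[symmetric])

definition I_op :: "('g \<Rightarrow> 'v set) \<Rightarrow> ('v \<Rightarrow> int \<Rightarrow> 'v \<Rightarrow> 'v) \<Rightarrow> 'g \<Rightarrow> 'g \<Rightarrow> 'g \<Rightarrow> 'v \<Rightarrow> complex \<Rightarrow> 'v \<Rightarrow> 'v::ab_group_add" where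
  "I_op Vg Y' g h k = (\<lambda>w a x. if w \<in> Vg g \<and> x \<in> Vg h \<and> a \<in> \<int> then dec Vg (Y' w \<lfloor>Re a\<rfloor> x) k else 0)"

lemma gchoose0: "i \<noteq> 0 \<Longrightarrow> ((0::complex) gchoose i) = 0"
  by (cases i) (auto simp: gbinomial_Suc)

locale vs = vector_space sc for sc :: "complex \<Rightarrow> 'v::ab_group_add \<Rightarrow> 'v" (infixr \<open>*s\<close> 75)
begin

lemma clinD: "clin sc f \<Longrightarrow> f (a *s x + b *s y) = a *s f x + b *s f y"
  by (simp add: clin_def)

lemma clin_zero: "clin sc f \<Longrightarrow> f 0 = 0"
  using clinD[of f 0 0 0 0] by simp

lemma clin_add: "clin sc f \<Longrightarrow> f (x + y) = f x + f y"
  using clinD[of f 1 x 1 y] by simp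

lemma clin_scale: "clin sc f \<Longrightarrow> f (a *s x) = a *s f x"
  using clinD[of f a x 0 0] by simp

lemma clin_additive: "clin sc f \<Longrightarrow> additive f"
  by (unfold_locales) (rule clin_add)

lemma clin_diff: "clin sc f \<Longrightarrow> f (x - y) = f x - f y"
  using additive.diff[OF clin_additive] .

lemma clin_sum: "clin sc f \<Longrightarrow> f (sum g A) = (\<Sum>x\<in>A. f (g x))"
  using additive.sum[OF clin_additive] .

lemma clin_scale_op: "clin sc (\<lambda>x. c *s x)"
  by (simp add: clin_def scale_right_distrib mult.commute)

lemma clin_Sum_any:
  assumes "clin sc f" "finite {i. g i \<noteq> 0}"
  shows "f (Sum_any g) = Sum_any (\<lambda>i. f (g i))"
proof -
  have "Sum_any g = sum g {i. g i \<noteq> 0}" by (rule Sum_any.expand_superset) (use assms in auto)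
  moreover have "Sum_any (\<lambda>i. f (g i)) = sum (\<lambda>i. f (g i)) {i. g i \<noteq> 0}"
    by (rule Sum_any.expand_superset) (use assms clin_zero in auto)
  ultimately show ?thesis using clin_sum[OF assms(1)] by simp
qed

lemma Sum_any_scale: "Sum_any (\<lambda>i. c *s f i) = c *s Sum_any f"
proof (cases "c = 0")
  case True then show ?thesis by simp
next
  case False
  then have eq: "{i. c *s f i \<noteq> 0} = {i. f i \<noteq> 0}" by auto
  show ?thesis
  proof (cases "finite {i. f i \<noteq> 0}")
    case True
    then show ?thesis using clin_Sum_any[OF clin_scale_op True] by simp
  next
    case False
    then show ?thesis using eq by (simp add: Sum_any.infinite)
  qed
qed

context
  fixes Y :: "'v \<Rightarrow> int \<Rightarrow> 'v \<Rightarrow> 'v" and one1 \<omega> :: 'v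
  assumes voa: "VOA sc Y one1 \<omega>"
begin

lemma lin2: "clin sc (Y u n)" using voa by (simp add: VOA_def)
lemma lin1: "clin sc (\<lambda>u. Y u n v)" using voa by (simp add: VOA_def)
lemma Y_0_right[simp]: "Y u n 0 = 0" using clin_zero[OF lin2] .
lemma Y_0_left[simp]: "Y 0 n v = 0" using clin_zero[OF lin1[of n v]] by simp
lemma Y_scale_right: "Y u n (a *s x) = a *s Y u n x" using clin_scale[OF lin2] .
lemma Y_scale_left: "Y (a *s u) n x = a *s Y u n x" using clin_scale[OF lin1[of n x]] by simp
lemma trunc: "\<exists>N. \<forall>n\<ge>N. Y u n v = 0" using voa by (simp add: VOA_def)
lemma vac: "Y one1 n v = (if n = -1 then v else 0)" using voa by (simp add: VOA_def)
lemma creation: "Y v (-1) one1 = v" using voa by (simp add: VOA_def)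
lemma L1: "Y (Y \<omega> 0 u) n v = (- of_int n) *s Y u (n - 1) v"
  using voa unfolding VOA_def by (metis add.commute add.right_inverse)
lemma comm_formula: "Sum_any (\<lambda>i::nat. (of_int m gchoose i :: complex) *s Y (Y u (int i) v) (m + n - int i) w)
   = Y u m (Y v n w) - Y v n (Y u m w)"
proof -
  have "Sum_any (\<lambda>i::nat. (of_int m gchoose i :: complex) *s Y (Y u (0 + int i) v) (m + n - int i) w)
      = Sum_any (\<lambda>i::nat. ((-1) ^ i * (of_int 0 gchoose i) :: complex) *s
            (Y u (m + 0 - int i) (Y v (n + int i) w)
             - ((-1::complex) powi 0) *s Y v (n + 0 - int i) (Y u (m + int i) w)))"
    using voa unfolding VOA_def borcherds_on_def by blast
  also have "\<dots> = Y u m (Y v n w) - Y v n (Y u m w)"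
    by (subst Sum_any_single[of 0]) (auto simp: gchoose0)
  finally show ?thesis by simp
qed

lemma max_index:
  assumes "Y u j0 v \<noteq> 0"
  shows "\<exists>j. Y u j v \<noteq> 0 \<and> (\<forall>j'>j. Y u j' v = 0)"
proof -
  obtain N where N: "\<forall>n\<ge>N. Y u n v = 0" using trunc by blast
  have j0: "j0 < N" using N assms by (meson not_less)
  define P where "P = (\<lambda>d::nat. Y u (N - int d) v \<noteq> 0)"
  have Pj0: "P (nat (N - j0))" using j0 assms by (simp add: P_def)
  define d0 where "d0 = (LEAST d. P d)"
  have Pd0: "P d0" unfolding d0_def by (rule LeastI[of P, OF Pj0])
  show ?thesis
  proof (intro exI conjI allI impI)
    show "Y u (N - int d0) v \<noteq> 0" using Pd0 by (simp add: P_def)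
    fix j' assume j': "N - int d0 < j'"
    show "Y u j' v = 0"
    proof (cases "j' \<ge> N")
      case True then show ?thesis using N by simp
    next
      case False
      then have "nat (N - j') < d0" using j' by simp
      then have "\<not> P (nat (N - j'))" unfolding d0_def by (rule not_less_Least)
      then show ?thesis using False by (simp add: P_def)
    qed
  qed
qed

lemma borch: "Sum_any (\<lambda>i::nat. (of_int m gchoose i :: complex) *s Y (Y u (l + int i) v) (m + n - int i) w)
      = Sum_any (\<lambda>i::nat. ((-1) ^ i * (of_int l gchoose i) :: complex) *s
            (Y u (m + l - int i) (Y v (n + int i) w)
             - ((-1::complex) powi l) *s Y v (n + l - int i) (Y u (m + int i) w)))"
  using voa unfolding VOA_def borcherds_on_def by blast

lemma ann_left:
  assumes x: "\<forall>j. Y u j x = 0"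
  shows "Y u p (Y w q x) = 0"
proof -
  obtain N where N: "\<forall>j\<ge>N. Y u j w = 0" using trunc by blast
  obtain M where M: "\<forall>j\<ge>M. Y w j x = 0" using trunc by blast
  have key: "Sum_any (\<lambda>i::nat. ((-1) ^ i * (of_int N gchoose i) :: complex) *s Y u (m + N - int i) (Y w (n + int i) x)) = 0" for m n
  proof -
    have "0 = Sum_any (\<lambda>i::nat. (of_int m gchoose i :: complex) *s Y (Y u (N + int i) w) (m + n - int i) x)"
      using N by simp
    also have "\<dots> = Sum_any (\<lambda>i::nat. ((-1) ^ i * (of_int N gchoose i) :: complex) *s
            (Y u (m + N - int i) (Y w (n + int i) x)
             - ((-1::complex) powi N) *s Y w (n + N - int i) (Y u (m + int i) x)))"
      by (rule borch)
    also have "\<dots> = Sum_any (\<lambda>i::nat. ((-1) ^ i * (of_int N gchoose i) :: complex) *s Y u (m + N - int i) (Y w (n + int i) x))"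
      using x by simp
    finally show ?thesis by simp
  qed
  have ind: "\<forall>q p. q \<ge> M - int k \<longrightarrow> Y u p (Y w q x) = 0" for k
  proof (induction k)
    case 0
    then show ?case using M by simp
  next
    case (Suc k)
    show ?case
    proof (intro allI impI)
      fix q p assume q: "M - int (Suc k) \<le> q"
      show "Y u p (Y w q x) = 0"
      proof (cases "q \<ge> M - int k")
        case True then show ?thesis using Suc by blast
      next
        case False
        have "Sum_any (\<lambda>i::nat. ((-1) ^ i * (of_int N gchoose i) :: complex) *s Y u ((p - N) + N - int i) (Y w (q + int i) x))
             = ((-1) ^ 0 * (of_int N gchoose 0) :: complex) *s Y u ((p - N) + N - int 0) (Y w (q + int 0) x)"
        proof (rule Sum_any_single)
          fix i :: nat assume "i \<noteq> 0"
          then have "q + int i \<ge> M - int k" using False q by simp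
          then show "((-1) ^ i * (of_int N gchoose i) :: complex) *s Y u ((p - N) + N - int i) (Y w (q + int i) x) = 0"
            using Suc by simp
        qed
        then show ?thesis using key[of "p - N" q] by simp
      qed
    qed
  qed
  show ?thesis using ind[of "nat (M - q)"] by simp
qed

lemma ann_right:
  assumes x: "\<forall>j. Y u j x = 0"
  shows "Y u p (Y x q w) = 0"
proof -
  obtain N where N: "\<forall>j\<ge>N. Y u j w = 0" using trunc by blast
  obtain M where M: "\<forall>j\<ge>M. Y x j w = 0" using trunc by blast
  have key: "Sum_any (\<lambda>i::nat. ((-1) ^ i * (of_int l gchoose i) :: complex) *s Y u (N + l - int i) (Y x (n + int i) w)) = 0" for l n
  proof -
    have "0 = Sum_any (\<lambda>i::nat. (of_int N gchoose i :: complex) *s Y (Y u (l + int i) x) (N + n - int i) w)"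
      using x by simp
    also have "\<dots> = Sum_any (\<lambda>i::nat. ((-1) ^ i * (of_int l gchoose i) :: complex) *s
            (Y u (N + l - int i) (Y x (n + int i) w)
             - ((-1::complex) powi l) *s Y x (n + l - int i) (Y u (N + int i) w)))"
      by (rule borch)
    also have "\<dots> = Sum_any (\<lambda>i::nat. ((-1) ^ i * (of_int l gchoose i) :: complex) *s Y u (N + l - int i) (Y x (n + int i) w))"
      using N by simp
    finally show ?thesis by simp
  qed
  have ind: "\<forall>q p. q \<ge> M - int k \<longrightarrow> Y u p (Y x q w) = 0" for k
  proof (induction k)
    case 0
    then show ?case using M by simp
  next
    case (Suc k)
    show ?case
    proof (intro allI impI)
      fix q p assume q: "M - int (Suc k) \<le> q"
      show "Y u p (Y x q w) = 0"
      proof (cases "q \<ge> M - int k")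
        case True then show ?thesis using Suc by blast
      next
        case False
        have "Sum_any (\<lambda>i::nat. ((-1) ^ i * (of_int (p - N) gchoose i) :: complex) *s Y u (N + (p - N) - int i) (Y x (q + int i) w))
             = ((-1) ^ 0 * (of_int (p - N) gchoose 0) :: complex) *s Y u (N + (p - N) - int 0) (Y x (q + int 0) w)"
        proof (rule Sum_any_single)
          fix i :: nat assume "i \<noteq> 0"
          then have "q + int i \<ge> M - int k" using False q by simp
          then show "((-1) ^ i * (of_int (p - N) gchoose i) :: complex) *s Y u (N + (p - N) - int i) (Y x (q + int i) w) = 0"
            using Suc by simp
        qed
        then show ?thesis using key[of "p - N" q] by simp
      qed
    qed
  qed
  show ?thesis using ind[of "nat (M - q)"] by simp
qed

end

section \<open>Graded decomposition\<close>

context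
  fixes Y :: "'v \<Rightarrow> int \<Rightarrow> 'v \<Rightarrow> 'v" and one1 \<omega> :: 'v and Vg :: "'g::ab_group_add \<Rightarrow> 'v set"
  assumes gr: "G_graded sc Y one1 \<omega> Vg"
begin

lemma sub: "csubspace sc (Vg g)" using gr by (simp add: G_graded_def)
lemma sub0: "0 \<in> Vg g" using sub by (simp add: csubspace_def)
lemma sub_lin: "x \<in> Vg g \<Longrightarrow> y \<in> Vg g \<Longrightarrow> a *s x + b *s y \<in> Vg g"
  using sub by (simp add: csubspace_def)
lemma sub_add: "x \<in> Vg g \<Longrightarrow> y \<in> Vg g \<Longrightarrow> x + y \<in> Vg g"
  using sub_lin[of x g y 1 1] by simp
lemma sub_scale: "x \<in> Vg g \<Longrightarrow> a *s x \<in> Vg g"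
  using sub_lin[of x g 0 a 0] sub0 by simp
lemma sub_diff: "x \<in> Vg g \<Longrightarrow> y \<in> Vg g \<Longrightarrow> x - y \<in> Vg g"
  using sub_lin[of x g y 1 "-1"] by simp
lemma sub_sum: "(\<And>i. i \<in> A \<Longrightarrow> f i \<in> Vg g) \<Longrightarrow> sum f A \<in> Vg g"
  by (induction A rule: infinite_finite_induct) (auto simp: sub0 sub_add)
lemma grading: "u \<in> Vg g \<Longrightarrow> v \<in> Vg h \<Longrightarrow> Y u n v \<in> Vg (g + h)"
  using gr by (simp add: G_graded_def)
lemma one_in: "one1 \<in> Vg 0" using gr by (simp add: G_graded_def)
lemma omega_in: "\<omega> \<in> Vg 0" using gr by (simp add: G_graded_def)

lemma dec_ex: "\<exists>!f. finite {g. f g \<noteq> 0} \<and> (\<forall>g. f g \<in> Vg g) \<and> v = Sum_any f"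
  using gr by (simp add: G_graded_def)

lemma dec_prop: "finite {g. dec Vg v g \<noteq> 0} \<and> (\<forall>g. dec Vg v g \<in> Vg g) \<and> v = Sum_any (dec Vg v)"
  unfolding dec_def by (rule theI'[OF dec_ex])

lemma dec_fin: "finite {g. dec Vg v g \<noteq> 0}" using dec_prop by blast
lemma dec_in: "dec Vg v g \<in> Vg g" using dec_prop by blast
lemma dec_sum: "Sum_any (dec Vg v) = v" using dec_prop by metis

lemma dec_unique: "finite {g. f g \<noteq> 0} \<Longrightarrow> (\<forall>g. f g \<in> Vg g) \<Longrightarrow> v = Sum_any f \<Longrightarrow> dec Vg v = f"
  using dec_ex[of v] dec_prop[of v] by blast

lemma dec_hom: "v \<in> Vg k \<Longrightarrow> dec Vg v = (\<lambda>g. if g = k then v else 0)"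
proof (rule dec_unique)
  assume "v \<in> Vg k"
  show "finite {g. (if g = k then v else 0) \<noteq> 0}" by (rule finite_subset[of _ "{k}"]) auto
  show "\<forall>g. (if g = k then v else 0) \<in> Vg g" using \<open>v \<in> Vg k\<close> sub0 by simp
  show "v = Sum_any (\<lambda>g. if g = k then v else 0)" by (subst Sum_any_single[of k]) auto
qed

lemma dec_lin: "dec Vg (a *s x + b *s y) = (\<lambda>g. a *s dec Vg x g + b *s dec Vg y g)"
proof (rule dec_unique)
  show "finite {g. a *s dec Vg x g + b *s dec Vg y g \<noteq> 0}"
    by (rule finite_subset[of _ "{g. dec Vg x g \<noteq> 0} \<union> {g. dec Vg y g \<noteq> 0}"]) (auto simp: dec_fin)
  show "\<forall>g. a *s dec Vg x g + b *s dec Vg y g \<in> Vg g" by (simp add: sub_lin dec_in)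
  have "Sum_any (\<lambda>g. a *s dec Vg x g + b *s dec Vg y g) = Sum_any (\<lambda>g. a *s dec Vg x g) + Sum_any (\<lambda>g. b *s dec Vg y g)"
    by (rule Sum_any.distrib) (rule finite_subset[OF _ dec_fin]; auto)+
  also have "\<dots> = a *s Sum_any (dec Vg x) + b *s Sum_any (dec Vg y)"
    using clin_Sum_any[OF clin_scale_op dec_fin] by simp
  finally show "a *s x + b *s y = Sum_any (\<lambda>g. a *s dec Vg x g + b *s dec Vg y g)" by (simp add: dec_sum)
qed

lemma dec_clin: "clin sc (\<lambda>v. dec Vg v k)"
  unfolding clin_def by (simp add: dec_lin)

lemma dec_commute:
  assumes T: "clin sc T" and TV: "\<And>g x. x \<in> Vg g \<Longrightarrow> T x \<in> Vg g"
  shows "dec Vg (T v) g = T (dec Vg v g)"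
proof -
  have "dec Vg (T v) = (\<lambda>g. T (dec Vg v g))"
  proof (rule dec_unique)
    show "finite {g. T (dec Vg v g) \<noteq> 0}"
      by (rule finite_subset[OF _ dec_fin[of v]]) (auto simp: clin_zero[OF T])
    show "\<forall>g. T (dec Vg v g) \<in> Vg g" by (simp add: TV dec_in)
    show "T v = Sum_any (\<lambda>g. T (dec Vg v g))"
      using clin_Sum_any[OF T dec_fin[of v]] dec_sum[of v] by simp
  qed
  then show ?thesis by simp
qed

lemma dec_single_in: "(\<And>k. k \<noteq> j \<Longrightarrow> dec Vg v k = 0) \<Longrightarrow> v \<in> Vg j"
  using Sum_any_single[of j "dec Vg v"] dec_sum[of v] dec_in[of v j] by simp

end

section \<open>Intertwining operators from vertex operators\<close>

context
  fixes Y Y' :: "'v \<Rightarrow> int \<Rightarrow> 'v \<Rightarrow> 'v" and one1 \<omega> :: 'v and Vg :: "'g::ab_group_add \<Rightarrow> 'v set"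
  assumes gr: "G_graded sc Y one1 \<omega> Vg" and voa: "VOA sc Y one1 \<omega>" and voa': "VOA sc Y' one1 \<omega>"
    and agree: "\<forall>u\<in>Vg 0. Y' u = Y u"
begin

lemma I_int: "w \<in> Vg g \<Longrightarrow> x \<in> Vg h \<Longrightarrow> I_op Vg Y' g h k w (of_int j) x = dec Vg (Y' w j x) k"
  by (simp add: I_op_def)
lemma I_nonint: "a \<notin> \<int> \<Longrightarrow> I_op Vg Y' g h k w a x = 0"
  by (simp add: I_op_def)

lemma Y0_pres: "v \<in> Vg 0 \<Longrightarrow> x \<in> Vg g \<Longrightarrow> Y v m x \<in> Vg g"
  using grading[OF gr, of v 0 x g m] by simp

lemma dec_Y0: "v \<in> Vg 0 \<Longrightarrow> dec Vg (Y v m y) k = Y v m (dec Vg y k)"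
  by (rule dec_commute[OF gr lin2[OF voa]]) (rule Y0_pres)

lemma borch_fin1: "finite {i::nat. (of_int m gchoose i :: complex) *s Y' (Y' u (l + int i) v) (m + n - int i) w \<noteq> 0}"
proof -
  obtain N where N: "\<forall>j\<ge>N. Y' u j v = 0" using trunc[OF voa'] by blast
  show ?thesis by (rule fin_bound[of "nat (N - l)"]) (use N Y_0_left[OF voa'] in auto)
qed

lemma borch_fin2: "finite {i::nat. ((-1) ^ i * (of_int l gchoose i) :: complex) *s
            (Y' u (m + l - int i) (Y' v (n + int i) w)
             - ((-1::complex) powi l) *s Y' v (n + l - int i) (Y' u (m + int i) w)) \<noteq> 0}"
proof -
  obtain N1 where N1: "\<forall>j\<ge>N1. Y' v j w = 0" using trunc[OF voa'] by blast
  obtain N2 where N2: "\<forall>j\<ge>N2. Y' u j w = 0" using trunc[OF voa'] by blast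
  show ?thesis by (rule fin_bound[of "max (nat (N1 - n)) (nat (N2 - m))"]) (use N1 N2 voa' in auto)
qed

lemma intw: "intertwining sc Y \<omega> (Vg 0) (Vg g) (Vg h) (Vg k) (I_op Vg Y' g h k)"
proof -
  let ?I = "I_op Vg Y' g h k"
  have c1: "\<forall>w a x. (w \<notin> Vg g \<or> x \<notin> Vg h) \<longrightarrow> ?I w a x = 0" by (auto simp: I_op_def)
  have c2: "\<forall>w a x. ?I w a x \<in> Vg k" by (auto simp: I_op_def dec_in[OF gr] sub0[OF gr])
  have c3: "\<forall>a x. x \<in> Vg h \<longrightarrow> clin_on sc (Vg g) (\<lambda>w. ?I w a x)"
    unfolding clin_on_def I_op_def
    by (auto simp: sub_lin[OF gr] clinD[OF lin1[OF voa']] dec_lin[OF gr])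
  have c4: "\<forall>a w. w \<in> Vg g \<longrightarrow> clin_on sc (Vg h) (?I w a)"
    unfolding clin_on_def I_op_def
    by (auto simp: sub_lin[OF gr] clinD[OF lin2[OF voa']] dec_lin[OF gr])
  have c5: "\<forall>w a x. \<exists>N::nat. \<forall>n\<ge>N. ?I w (a + of_nat n) x = 0"
  proof (intro allI)
    fix w a x
    show "\<exists>N::nat. \<forall>n\<ge>N. ?I w (a + of_nat n) x = 0"
    proof (cases "a \<in> \<int> \<and> w \<in> Vg g \<and> x \<in> Vg h")
      case True
      then obtain j where j: "a = of_int j" by (auto elim: Ints_cases)
      obtain N where N: "\<forall>n\<ge>N. Y' w n x = 0" using trunc[OF voa'] by blast
      have "?I w (a + of_nat n) x = 0" if "n \<ge> nat (N - j)" for n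
      proof -
        have "a + of_nat n = of_int (j + int n)" using j by simp
        then show ?thesis using I_int[of w g x h k "j + int n"] True N that dec_lin[OF gr, of 0 0 0 0] by simp
      qed
      then show ?thesis by blast
    next
      case False
      then show ?thesis
      proof (cases "a \<in> \<int>")
        case True
        then have "a + of_nat n \<in> \<int>" for n by simp
        then show ?thesis using False by (auto simp: I_op_def)
      next
        case F2: False
        have "a + of_nat n \<notin> \<int>" for n
        proof
          assume "a + of_nat n \<in> \<int>"
          then have "a + of_nat n - of_nat n \<in> \<int>" by (intro Ints_diff) auto
          then show False using F2 by simp
        qed
        then show ?thesis by (auto simp: I_op_def)
      qed
    qed
  qed
  have om0: "\<omega> \<in> Vg 0" by (rule omega_in[OF gr])
  have Yom: "Y' \<omega> = Y \<omega>" using agree om0 by blast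
  have comm0: "Y' \<omega> 0 (Y' w n x) - Y' w n (Y' \<omega> 0 x) = (- of_int n) *s Y' w (n - 1) x" for w n x
  proof -
    have "Sum_any (\<lambda>i::nat. (of_int 0 gchoose i :: complex) *s Y' (Y' \<omega> (0 + int i) w) (0 + n - int i) x)
      = Sum_any (\<lambda>i::nat. ((-1) ^ i * (of_int 0 gchoose i) :: complex) *s
            (Y' \<omega> (0 + 0 - int i) (Y' w (n + int i) x)
             - ((-1::complex) powi 0) *s Y' w (n + 0 - int i) (Y' \<omega> (0 + int i) x)))"
      by (rule borch[OF voa'])
    moreover have "Sum_any (\<lambda>i::nat. (of_int 0 gchoose i :: complex) *s Y' (Y' \<omega> (0 + int i) w) (0 + n - int i) x)
        = Y' (Y' \<omega> 0 w) n x"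
      by (subst Sum_any_single[of 0]) (auto simp: gchoose0)
    moreover have "Sum_any (\<lambda>i::nat. ((-1) ^ i * (of_int 0 gchoose i) :: complex) *s
            (Y' \<omega> (0 + 0 - int i) (Y' w (n + int i) x)
             - ((-1::complex) powi 0) *s Y' w (n + 0 - int i) (Y' \<omega> (0 + int i) x)))
        = Y' \<omega> 0 (Y' w n x) - Y' w n (Y' \<omega> 0 x)"
      by (subst Sum_any_single[of 0]) (auto simp: gchoose0)
    ultimately show ?thesis using L1[OF voa'] by simp
  qed
  have c6: "\<forall>w\<in>Vg g. \<forall>x\<in>Vg h. \<forall>b.
        Vir Y \<omega> (-1) (?I w b x) - ?I w b (Vir Y \<omega> (-1) x) = (- b) *s ?I w (b - 1) x"
  proof (intro ballI allI)
    fix w x b assume w: "w \<in> Vg g" and x: "x \<in> Vg h"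
    have x': "Y \<omega> 0 x \<in> Vg h" by (rule Y0_pres[OF om0 x])
    show "Vir Y \<omega> (-1) (?I w b x) - ?I w b (Vir Y \<omega> (-1) x) = (- b) *s ?I w (b - 1) x"
    proof (cases "b \<in> \<int>")
      case True
      then obtain n where n: "b = of_int n" by (auto elim: Ints_cases)
      have bm: "b - 1 = of_int (n - 1)" using n by simp
      have "Vir Y \<omega> (-1) (?I w b x) - ?I w b (Vir Y \<omega> (-1) x)
          = Y \<omega> 0 (dec Vg (Y' w n x) k) - dec Vg (Y' w n (Y \<omega> 0 x)) k"
        using I_int[OF w x] I_int[OF w x'] n by simp
      also have "\<dots> = dec Vg (Y' \<omega> 0 (Y' w n x) - Y' w n (Y' \<omega> 0 x)) k"
        using dec_Y0[OF om0] clin_diff[OF dec_clin[OF gr]] Yom by simp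
      also have "\<dots> = (- b) *s dec Vg (Y' w (n - 1) x) k"
        using comm0 clin_scale[OF dec_clin[OF gr], of "- of_int n"] n by (simp del: scale_minus_left)
      also have "\<dots> = (- b) *s ?I w (b - 1) x" unfolding bm by (simp only: I_int[OF w x])
      finally show ?thesis .
    next
      case False
      have "b - 1 \<notin> \<int>"
      proof
        assume "b - 1 \<in> \<int>" then have "b - 1 + 1 \<in> \<int>" by (intro Ints_add) auto
        then show False using False by simp
      qed
      then show ?thesis using False by (simp add: I_nonint Y_0_right[OF voa])
    qed
  qed
  have c7: "\<forall>v\<in>Vg 0. \<forall>w\<in>Vg g. \<forall>x\<in>Vg h. \<forall>m l :: int. \<forall>a :: complex.
      Sum_any (\<lambda>i::nat. (of_int m gchoose i :: complex) *s
                 ?I (Y v (l + int i) w) (of_int m + a - of_nat i) x)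
      = Sum_any (\<lambda>i::nat. ((-1) ^ i * (of_int l gchoose i) :: complex) *s
            (Y v (m + l - int i) (?I w (a + of_nat i) x)
             - ((-1::complex) powi l) *s ?I w (a + of_int l - of_nat i) (Y v (m + int i) x)))"
  proof (intro ballI allI)
    fix v w x m l a assume v: "v \<in> Vg 0" and w: "w \<in> Vg g" and x: "x \<in> Vg h"
    have Yv: "Y' v = Y v" using agree v by blast
    have wi: "Y v j w \<in> Vg g" for j by (rule Y0_pres[OF v w])
    have xi: "Y v j x \<in> Vg h" for j by (rule Y0_pres[OF v x])
    show "Sum_any (\<lambda>i::nat. (of_int m gchoose i :: complex) *s
                 ?I (Y v (l + int i) w) (of_int m + a - of_nat i) x)
      = Sum_any (\<lambda>i::nat. ((-1) ^ i * (of_int l gchoose i) :: complex) *s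
            (Y v (m + l - int i) (?I w (a + of_nat i) x)
             - ((-1::complex) powi l) *s ?I w (a + of_int l - of_nat i) (Y v (m + int i) x)))"
    proof (cases "a \<in> \<int>")
      case True
      then obtain n where n: "a = of_int n" by (auto elim: Ints_cases)
      have e1: "of_int m + a - of_nat i = of_int (m + n - int i)" for i using n by simp
      have e2: "a + of_nat i = of_int (n + int i)" for i using n by simp
      have e3: "a + of_int l - of_nat i = of_int (n + l - int i)" for i using n by simp
      have "Sum_any (\<lambda>i::nat. (of_int m gchoose i :: complex) *s
                 ?I (Y v (l + int i) w) (of_int m + a - of_nat i) x)
          = Sum_any (\<lambda>i::nat. dec Vg ((of_int m gchoose i :: complex) *s Y' (Y' v (l + int i) w) (m + n - int i) x) k)"
        by (simp only: e1 I_int[OF wi x] Yv clin_scale[OF dec_clin[OF gr]])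
      also have "\<dots> = dec Vg (Sum_any (\<lambda>i::nat. (of_int m gchoose i :: complex) *s Y' (Y' v (l + int i) w) (m + n - int i) x)) k"
        by (rule clin_Sum_any[OF dec_clin[OF gr] borch_fin1, symmetric])
      also have "\<dots> = dec Vg (Sum_any (\<lambda>i::nat. ((-1) ^ i * (of_int l gchoose i) :: complex) *s
            (Y' v (m + l - int i) (Y' w (n + int i) x)
             - ((-1::complex) powi l) *s Y' w (n + l - int i) (Y' v (m + int i) x)))) k"
        by (simp only: borch[OF voa'])
      also have "\<dots> = Sum_any (\<lambda>i::nat. dec Vg (((-1) ^ i * (of_int l gchoose i) :: complex) *s
            (Y' v (m + l - int i) (Y' w (n + int i) x)
             - ((-1::complex) powi l) *s Y' w (n + l - int i) (Y' v (m + int i) x))) k)"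
        by (rule clin_Sum_any[OF dec_clin[OF gr] borch_fin2])
      also have "\<dots> = Sum_any (\<lambda>i::nat. ((-1) ^ i * (of_int l gchoose i) :: complex) *s
            (Y v (m + l - int i) (?I w (a + of_nat i) x)
             - ((-1::complex) powi l) *s ?I w (a + of_int l - of_nat i) (Y v (m + int i) x)))"
        by (simp only: e2 e3 I_int[OF w x] I_int[OF w xi] Yv clin_scale[OF dec_clin[OF gr]]
            clin_diff[OF dec_clin[OF gr]] dec_Y0[OF v])
      finally show ?thesis .
    next
      case False
      have ni: "of_int j + a - of_nat i \<notin> \<int>" "a + of_nat i \<notin> \<int>" "a + of_int j - of_nat i \<notin> \<int>" for i :: nat and j :: int
      proof -
        show "of_int j + a - of_nat i \<notin> \<int>"
        proof
          assume h: "of_int j + a - of_nat i \<in> \<int>"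
          have "a = (of_int j + a - of_nat i) - of_int j + of_nat i" by simp
          then have "a \<in> \<int>" using h by (metis Ints_add Ints_diff Ints_of_int Ints_of_nat)
          then show False using False by simp
        qed
        show "a + of_nat i \<notin> \<int>"
        proof
          assume h: "a + of_nat i \<in> \<int>"
          have "a = (a + of_nat i) - of_nat i" by simp
          then have "a \<in> \<int>" using h by (metis Ints_diff Ints_of_nat)
          then show False using False by simp
        qed
        show "a + of_int j - of_nat i \<notin> \<int>"
        proof
          assume h: "a + of_int j - of_nat i \<in> \<int>"
          have "a = (a + of_int j - of_nat i) - of_int j + of_nat i" by simp
          then have "a \<in> \<int>" using h by (metis Ints_add Ints_diff Ints_of_int Ints_of_nat)
          then show False using False by simp
        qed
      qed
      show ?thesis by (simp add: I_nonint ni Y_0_right[OF voa])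
    qed
  qed
  show ?thesis unfolding intertwining_def using c1 c2 c3 c4 c5 c6 c7 by blast
qed

end

lemma ann_nonzero:
  assumes s: "simple_VOA sc Y one1 \<omega>" and u: "u \<noteq> 0" and v: "v \<noteq> 0"
  shows "\<exists>n. Y u n v \<noteq> 0"
proof (rule ccontr)
  assume c: "\<not> ?thesis"
  have voa: "VOA sc Y one1 \<omega>" using s by (simp add: simple_VOA_def)
  define A where "A = {x. \<forall>j. Y u j x = 0}"
  have "VOA_ideal sc Y A"
    unfolding VOA_ideal_def csubspace_def A_def
    using ann_left[OF voa] ann_right[OF voa] clinD[OF lin2[OF voa]] Y_0_right[OF voa] by auto
  then have "A = {0} \<or> A = UNIV" using s by (simp add: simple_VOA_def)
  moreover have "v \<in> A" using c by (simp add: A_def)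
  ultimately have "one1 \<in> A" using v by auto
  then have "Y u (-1) one1 = 0" by (simp add: A_def)
  then show False using creation[OF voa] u by simp
qed

section \<open>The scalar cocycle\<close>

context
  fixes Y Ybar :: "'v \<Rightarrow> int \<Rightarrow> 'v \<Rightarrow> 'v" and one1 \<omega> :: 'v and Vg :: "'g::ab_group_add \<Rightarrow> 'v set"
  assumes sY: "simple_VOA sc Y one1 \<omega>" and gr: "G_graded sc Y one1 \<omega> Vg"
    and nz: "\<forall>g. Vg g \<noteq> {0}"
    and fus: "\<forall>g h k. fusion_rule sc Y \<omega> (Vg 0) (Vg g) (Vg h) (Vg k) (if g + h = k then 1 else 0)"
    and sYb: "simple_VOA sc Ybar one1 \<omega>"
    and agree: "\<forall>u\<in>Vg 0. Ybar u = Y u"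
begin

lemma voaY: "VOA sc Y one1 \<omega>" using sY by (simp add: simple_VOA_def)
lemma voaYb: "VOA sc Ybar one1 \<omega>" using sYb by (simp add: simple_VOA_def)

lemma nz_elem: "\<exists>u. u \<in> Vg g \<and> u \<noteq> 0"
  using nz sub0[OF gr, of g] by blast

lemma scalar_ex: "\<exists>c. c \<noteq> 0 \<and> (\<forall>u\<in>Vg g. \<forall>v\<in>Vg h. \<forall>n. Ybar u n v = c *s Y u n v)"
proof -
  have intwY: "intertwining sc Y \<omega> (Vg 0) (Vg g) (Vg h) (Vg k) (I_op Vg Y g h k)" for k
    by (rule intw[OF gr voaY voaY]) simp
  have intwB: "intertwining sc Y \<omega> (Vg 0) (Vg g) (Vg h) (Vg k) (I_op Vg Ybar g h k)" for k
    by (rule intw[OF gr voaY voaYb agree])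
  have inVg: "Ybar u n v \<in> Vg (g + h)" if u: "u \<in> Vg g" and v: "v \<in> Vg h" for u v n
  proof (rule dec_single_in[OF gr])
    fix k assume k: "k \<noteq> g + h"
    have "has_dim_C sc {I. intertwining sc Y \<omega> (Vg 0) (Vg g) (Vg h) (Vg k) I} 0"
      using fus k unfolding fusion_rule_def by (metis (full_types))
    then have "{I. intertwining sc Y \<omega> (Vg 0) (Vg g) (Vg h) (Vg k) I} = {\<lambda>w a x. 0}"
      unfolding has_dim_C_def by auto
    then have "I_op Vg Ybar g h k = (\<lambda>w a x. 0)" using intwB[of k] by blast
    then have "I_op Vg Ybar g h k u (of_int n) v = 0" by simp
    then show "dec Vg (Ybar u n v) k = 0" using I_int[OF gr voaY voaYb agree u v] by simp
  qed
  have "has_dim_C sc {I. intertwining sc Y \<omega> (Vg 0) (Vg g) (Vg h) (Vg (g + h)) I} 1"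
    using fus unfolding fusion_rule_def by (metis (full_types))
  then obtain B where B: "{I. intertwining sc Y \<omega> (Vg 0) (Vg g) (Vg h) (Vg (g + h)) I}
      = {(\<lambda>w a x. \<Sum>i<1. c i *s (B!i) w a x) | c. True}"
    unfolding has_dim_C_def by blast
  obtain cY where cY: "I_op Vg Y g h (g + h) = (\<lambda>w a x. cY *s (B!0) w a x)"
    using intwY[of "g + h"] B by auto
  obtain cB where cB: "I_op Vg Ybar g h (g + h) = (\<lambda>w a x. cB *s (B!0) w a x)"
    using intwB[of "g + h"] B by auto
  have IY: "I_op Vg Y g h (g + h) u (of_int n) v = Y u n v" if u: "u \<in> Vg g" and v: "v \<in> Vg h" for u v n
    using I_int[OF gr voaY voaY _ u v] dec_hom[OF gr grading[OF gr u v]] by simp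
  have IB: "I_op Vg Ybar g h (g + h) u (of_int n) v = Ybar u n v" if u: "u \<in> Vg g" and v: "v \<in> Vg h" for u v n
    using I_int[OF gr voaY voaYb agree u v] dec_hom[OF gr inVg[OF u v]] by simp
  obtain u0 where u0: "u0 \<in> Vg g" "u0 \<noteq> 0" using nz_elem by blast
  obtain v0 where v0: "v0 \<in> Vg h" "v0 \<noteq> 0" using nz_elem by blast
  obtain n0 where n0: "Y u0 n0 v0 \<noteq> 0" using ann_nonzero[OF sY u0(2) v0(2)] by blast
  obtain n1 where n1: "Ybar u0 n1 v0 \<noteq> 0" using ann_nonzero[OF sYb u0(2) v0(2)] by blast
  have "cY \<noteq> 0" using IY[OF u0(1) v0(1), of n0] n0 cY by (metis scale_zero_left)
  define c where "c = cB / cY"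
  have eq: "Ybar u n v = c *s Y u n v" if u: "u \<in> Vg g" and v: "v \<in> Vg h" for u v n
  proof -
    have "Ybar u n v = cB *s (B!0) u (of_int n) v" using IB[OF u v] cB by metis
    also have "\<dots> = c *s (cY *s (B!0) u (of_int n) v)" using \<open>cY \<noteq> 0\<close> by (simp add: c_def)
    also have "\<dots> = c *s Y u n v" using IY[OF u v] cY by metis
    finally show ?thesis .
  qed
  have "c \<noteq> 0" using eq[OF u0(1) v0(1), of n1] n1 by auto
  then show ?thesis using eq by blast
qed

definition cc :: "'g \<Rightarrow> 'g \<Rightarrow> complex" where
  "cc g h = (SOME c. c \<noteq> 0 \<and> (\<forall>u\<in>Vg g. \<forall>v\<in>Vg h. \<forall>n. Ybar u n v = c *s Y u n v))"

lemma cc_prop: "cc g h \<noteq> 0 \<and> (\<forall>u\<in>Vg g. \<forall>v\<in>Vg h. \<forall>n. Ybar u n v = cc g h *s Y u n v)"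
  unfolding cc_def by (rule someI_ex[OF scalar_ex])

lemma cc_nz: "cc g h \<noteq> 0" using cc_prop by blast
lemma Yb_eq: "u \<in> Vg g \<Longrightarrow> v \<in> Vg h \<Longrightarrow> Ybar u n v = cc g h *s Y u n v"
  using cc_prop by blast

lemma Yb_in: "u \<in> Vg g \<Longrightarrow> v \<in> Vg h \<Longrightarrow> Ybar u n v \<in> Vg (g + h)"
  using Yb_eq sub_scale[OF gr] grading[OF gr] by metis

lemma cc_0_left: "cc 0 h = 1"
proof -
  obtain v where v: "v \<in> Vg h" "v \<noteq> 0" using nz_elem by blast
  have "Ybar one1 (-1) v = Y one1 (-1) v" using agree one_in[OF gr] by simp
  then have "cc 0 h *s v = 1 *s v" using Yb_eq[OF one_in[OF gr] v(1)] vac[OF voaY] by simp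
  then show ?thesis using v(2) by (metis scale_cancel_right)
qed

lemma cc_0_right: "cc g 0 = 1"
proof -
  obtain u where u: "u \<in> Vg g" "u \<noteq> 0" using nz_elem by blast
  have "Ybar u (-1) one1 = Y u (-1) one1" using creation[OF voaY] creation[OF voaYb] by simp
  then have "cc g 0 *s u = 1 *s u" using Yb_eq[OF u(1) one_in[OF gr]] creation[OF voaY] by simp
  then show ?thesis using u(2) by (metis scale_cancel_right)
qed

lemma cc_sym: "cc g h = cc h g"
proof -
  obtain u where u: "u \<in> Vg g" "u \<noteq> 0" using nz_elem by blast
  obtain v where v: "v \<in> Vg h" "v \<noteq> 0" using nz_elem by blast
  obtain n where n: "Y v n u \<noteq> 0" using ann_nonzero[OF sY v(2) u(2)] by blast
  have o: "one1 \<in> Vg 0" by (rule one_in[OF gr])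
  let ?m = "-1::int"
  have "Sum_any (\<lambda>i::nat. (of_int ?m gchoose i :: complex) *s Ybar (Ybar u (int i) v) (?m + n - int i) one1)
     = Ybar u ?m (Ybar v n one1) - Ybar v n (Ybar u ?m one1)" by (rule comm_formula[OF voaYb])
  moreover have "Sum_any (\<lambda>i::nat. (of_int ?m gchoose i :: complex) *s Ybar (Ybar u (int i) v) (?m + n - int i) one1)
     = cc g h *s Sum_any (\<lambda>i::nat. (of_int ?m gchoose i :: complex) *s Y (Y u (int i) v) (?m + n - int i) one1)"
  proof -
    have "Ybar (Ybar u (int i) v) j one1 = cc g h *s Y (Y u (int i) v) j one1" for i j
      using Yb_eq[OF u(1) v(1)] Yb_eq[OF grading[OF gr u(1) v(1)] o] cc_0_right Y_scale_left[OF voaYb] by simp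
    then show ?thesis by (simp add: Sum_any_scale[symmetric] mult.commute)
  qed
  moreover have "Sum_any (\<lambda>i::nat. (of_int ?m gchoose i :: complex) *s Y (Y u (int i) v) (?m + n - int i) one1)
     = Y u ?m (Y v n one1) - Y v n (Y u ?m one1)" by (rule comm_formula[OF voaY])
  moreover have "Ybar u ?m (Ybar v n one1) = cc g h *s Y u ?m (Y v n one1)"
    using Yb_eq[OF v(1) o] cc_0_right Yb_eq[OF u(1) grading[OF gr v(1) o]] by simp
  moreover have "Ybar v n (Ybar u ?m one1) = cc h g *s Y v n (Y u ?m one1)"
    using Yb_eq[OF u(1) o] cc_0_right Yb_eq[OF v(1) grading[OF gr u(1) o]] by simp
  ultimately have "cc g h *s Y v n (Y u ?m one1) = cc h g *s Y v n (Y u ?m one1)"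
    by (simp add: scale_right_diff_distrib, metis)
  then show ?thesis using n creation[OF voaY] by simp
qed

lemma cc_cocycle: "cc g h * cc (g + h) k = cc h k * cc g (h + k)"
proof -
  obtain u where u: "u \<in> Vg g" "u \<noteq> 0" using nz_elem by blast
  obtain v where v: "v \<in> Vg h" "v \<noteq> 0" using nz_elem by blast
  obtain w where w: "w \<in> Vg k" "w \<noteq> 0" using nz_elem by blast
  obtain j0 where "Y u j0 v \<noteq> 0" using ann_nonzero[OF sY u(2) v(2)] by blast
  then obtain j where j: "Y u j v \<noteq> 0" "\<forall>j'>j. Y u j' v = 0" using max_index[OF voaY] by blast
  obtain q where q: "Y (Y u j v) q w \<noteq> 0" using ann_nonzero[OF sY j(1) w(2)] by blast
  obtain M where M: "\<forall>n\<ge>M. Y u n w = 0" using trunc[OF voaY] by blast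
  have uv: "Y u i v \<in> Vg (g + h)" for i by (rule grading[OF gr u(1) v(1)])
  have vw: "Y v i w \<in> Vg (h + k)" for i by (rule grading[OF gr v(1) w(1)])
  have uw: "Y u i w \<in> Vg (g + k)" for i by (rule grading[OF gr u(1) w(1)])
  define L where "L = (\<lambda>i::nat. (of_int M gchoose i :: complex) *s Y (Y u (j + int i) v) (M + (q - M) - int i) w)"
  define R where "R = (\<lambda>i::nat. ((-1) ^ i * (of_int j gchoose i) :: complex) *s
            (Y u (M + j - int i) (Y v ((q - M) + int i) w)
             - ((-1::complex) powi j) *s Y v ((q - M) + j - int i) (Y u (M + int i) w)))"
  define Lb where "Lb = (\<lambda>i::nat. (of_int M gchoose i :: complex) *s Ybar (Ybar u (j + int i) v) (M + (q - M) - int i) w)"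
  define Rb where "Rb = (\<lambda>i::nat. ((-1) ^ i * (of_int j gchoose i) :: complex) *s
            (Ybar u (M + j - int i) (Ybar v ((q - M) + int i) w)
             - ((-1::complex) powi j) *s Ybar v ((q - M) + j - int i) (Ybar u (M + int i) w)))"
  have LR: "Sum_any L = Sum_any R" unfolding L_def R_def by (rule borch[OF voaY])
  have LRb: "Sum_any Lb = Sum_any Rb" unfolding Lb_def Rb_def by (rule borch[OF voaYb])
  have Lsum: "Sum_any L = Y (Y u j v) q w"
    unfolding L_def by (subst Sum_any_single[of 0]) (use j(2) voaY in auto)
  have Lb_eq: "Lb i = (cc g h * cc (g + h) k) *s L i" for i
    unfolding Lb_def L_def
    using Yb_eq[OF u(1) v(1)] Yb_eq[OF uv w(1)] Y_scale_left[OF voaYb] by (simp add: scale_left_commute)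
  have Rb_eq: "Rb i = (cc h k * cc g (h + k)) *s R i" for i
  proof -
    have z: "Y u (M + int i) w = 0" using M by simp
    then have zb: "Ybar u (M + int i) w = 0" using Yb_eq[OF u(1) w(1)] by simp
    show ?thesis unfolding Rb_def R_def z zb
      using Yb_eq[OF v(1) w(1)] Yb_eq[OF u(1) vw] Y_scale_right[OF voaYb] Y_0_right[OF voaYb] Y_0_right[OF voaY]
      by (simp add: scale_left_commute)
  qed
  have "(cc g h * cc (g + h) k) *s Y (Y u j v) q w = (cc h k * cc g (h + k)) *s Y (Y u j v) q w"
  proof -
    have "(cc g h * cc (g + h) k) *s Y (Y u j v) q w = Sum_any Lb"
      by (simp only: fun_eq_iff[THEN iffD2, OF allI[of _, OF Lb_eq]] Sum_any_scale Lsum)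
    also have "\<dots> = Sum_any Rb" by (rule LRb)
    also have "\<dots> = (cc h k * cc g (h + k)) *s Sum_any R" by (simp only: fun_eq_iff[THEN iffD2, OF allI[of _, OF Rb_eq]] Sum_any_scale)
    finally show ?thesis using LR Lsum by simp
  qed
  then show ?thesis using q by simp
qed

end

section \<open>The isomorphism\<close>

context
  fixes Y Ybar :: "'v \<Rightarrow> int \<Rightarrow> 'v \<Rightarrow> 'v" and one1 \<omega> :: 'v and Vg :: "'g::ab_group_add \<Rightarrow> 'v set"
  assumes sY: "simple_VOA sc Y one1 \<omega>" and gr: "G_graded sc Y one1 \<omega> Vg"
    and nz: "\<forall>g. Vg g \<noteq> {0}"
    and fus: "\<forall>g h k. fusion_rule sc Y \<omega> (Vg 0) (Vg g) (Vg h) (Vg k) (if g + h = k then 1 else 0)"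
    and sYb: "simple_VOA sc Ybar one1 \<omega>"
    and agree: "\<forall>u\<in>Vg 0. Ybar u = Y u"
begin

lemma scaled_dec:
  "dec Vg (Sum_any (\<lambda>g. a g *s dec Vg v g)) = (\<lambda>g. a g *s dec Vg v g)"
proof (rule dec_unique[OF gr])
  show "finite {g. a g *s dec Vg v g \<noteq> 0}"
    by (rule finite_subset[OF _ dec_fin[OF gr, of v]]) auto
  show "\<forall>g. a g *s dec Vg v g \<in> Vg g" by (simp add: sub_scale[OF gr] dec_in[OF gr])
qed simp

lemma main_iso: "\<exists>\<phi>. VOA_iso sc Y one1 \<omega> Ybar one1 \<omega> \<phi>"
proof -
  note cc_defs = cc_nz[OF sY gr nz fus sYb agree] cc_0_left[OF sY gr nz fus sYb agree]
     cc_sym[OF sY gr nz fus sYb agree] cc_cocycle[OF sY gr nz fus sYb agree]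
  let ?c = "cc Y Ybar Vg"
  obtain f where fnz: "\<And>g. f g \<noteq> 0" and fm: "\<And>g h. f (g + h) = ?c g h * f g * f h"
    using cocycle_trivial[of ?c] cc_defs by blast
  have f0: "f 0 = 1"
  proof -
    have "f 0 = f 0 * f 0" using fm[of 0 0] cc_defs by simp
    then show ?thesis using fnz[of 0] by (metis mult_cancel_left1)
  qed
  define \<phi> where "\<phi> = (\<lambda>v. Sum_any (\<lambda>g. f g *s dec Vg v g))"
  define \<psi> where "\<psi> = (\<lambda>v. Sum_any (\<lambda>g. inverse (f g) *s dec Vg v g))"
  have fin: "finite {g. dec Vg v g \<noteq> 0}" for v by (rule dec_fin[OF gr])
  have finS: "finite {g. a g *s dec Vg v g \<noteq> 0}" for a v
    by (rule finite_subset[OF _ fin[of v]]) auto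
  have phipsi: "\<phi> (\<psi> v) = v" for v
    unfolding \<phi>_def \<psi>_def scaled_dec using fnz by (simp add: dec_sum[OF gr])
  have psiphi: "\<psi> (\<phi> v) = v" for v
    unfolding \<phi>_def \<psi>_def scaled_dec using fnz by (simp add: dec_sum[OF gr])
  have bij: "bij \<phi>" by (rule o_bij[of \<psi>]) (auto simp: phipsi psiphi)
  have clin: "clin sc \<phi>"
    unfolding clin_def
  proof (intro allI)
    fix a b x y
    have "\<phi> (a *s x + b *s y) = Sum_any (\<lambda>g. a *s (f g *s dec Vg x g) + b *s (f g *s dec Vg y g))"
      unfolding \<phi>_def dec_lin[OF gr] by (simp add: scale_right_distrib mult.commute)
    also have "\<dots> = Sum_any (\<lambda>g. a *s (f g *s dec Vg x g)) + Sum_any (\<lambda>g. b *s (f g *s dec Vg y g))"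
      by (rule Sum_any.distrib) (rule finite_subset[OF _ fin]; auto)+
    also have "\<dots> = a *s \<phi> x + b *s \<phi> y" unfolding \<phi>_def by (simp only: Sum_any_scale)
    finally show "\<phi> (a *s x + b *s y) = a *s \<phi> x + b *s \<phi> y" .
  qed
  have phi_hom: "v \<in> Vg k \<Longrightarrow> \<phi> v = f k *s v" for v k
    unfolding \<phi>_def dec_hom[OF gr] by (subst Sum_any_single[of k]) auto
  have phi_one: "\<phi> one1 = one1" using phi_hom[OF one_in[OF gr]] f0 by simp
  have phi_om: "\<phi> \<omega> = \<omega>" using phi_hom[OF omega_in[OF gr]] f0 by simp
  have voaY: "VOA sc Y one1 \<omega>" and voaYb: "VOA sc Ybar one1 \<omega>"
    using sY sYb by (simp_all add: simple_VOA_def)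
  have decomp: "x = (\<Sum>g\<in>{g. dec Vg x g \<noteq> 0}. dec Vg x g)" for x
    using Sum_any.expand_superset[OF fin[of x], of "dec Vg x"] dec_sum[OF gr, of x] by simp
  have phi_decomp: "\<phi> x = (\<Sum>g\<in>{g. dec Vg x g \<noteq> 0}. f g *s dec Vg x g)" for x
    unfolding \<phi>_def by (rule Sum_any.expand_superset[OF fin]) auto
  have hom: "\<phi> (Y u n v) = Ybar (\<phi> u) n (\<phi> v)" for u n v
  proof -
    let ?Su = "{g. dec Vg u g \<noteq> 0}" and ?Sv = "{g. dec Vg v g \<noteq> 0}"
    have "Y u n v = (\<Sum>g\<in>?Su. \<Sum>h\<in>?Sv. Y (dec Vg u g) n (dec Vg v h))"
      by (subst decomp[of u], subst decomp[of v])
         (simp add: clin_sum[OF lin1[OF voaY]] clin_sum[OF lin2[OF voaY]], rule sum.swap)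
    then have "\<phi> (Y u n v) = (\<Sum>g\<in>?Su. \<Sum>h\<in>?Sv. \<phi> (Y (dec Vg u g) n (dec Vg v h)))"
      by (simp add: clin_sum[OF clin])
    also have "\<dots> = (\<Sum>g\<in>?Su. \<Sum>h\<in>?Sv. f (g + h) *s Y (dec Vg u g) n (dec Vg v h))"
      by (intro sum.cong refl phi_hom grading[OF gr dec_in[OF gr] dec_in[OF gr]])
    also have "\<dots> = (\<Sum>g\<in>?Su. \<Sum>h\<in>?Sv. Ybar (f g *s dec Vg u g) n (f h *s dec Vg v h))"
    proof (intro sum.cong refl)
      fix g h
      show "f (g + h) *s Y (dec Vg u g) n (dec Vg v h) = Ybar (f g *s dec Vg u g) n (f h *s dec Vg v h)"
        using Yb_eq[OF sY gr nz fus sYb agree dec_in[OF gr] dec_in[OF gr]] fm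
          Y_scale_left[OF voaYb] Y_scale_right[OF voaYb] by (simp add: mult_ac)
    qed
    also have "\<dots> = Ybar (\<phi> u) n (\<phi> v)"
      by (subst phi_decomp[of u], subst phi_decomp[of v])
         (simp add: clin_sum[OF lin1[OF voaYb]] clin_sum[OF lin2[OF voaYb]], rule sum.swap)
    finally show ?thesis .
  qed
  show ?thesis unfolding VOA_iso_def using clin bij phi_one phi_om hom by blast
qed

end

end



theorem proposition5p3:
  fixes sc :: "complex \<Rightarrow> 'v::ab_group_add \<Rightarrow> 'v"
    and Y Ybar :: "'v \<Rightarrow> int \<Rightarrow> 'v \<Rightarrow> 'v"
    and one \<omega> :: 'v
    and Vg :: "'g::ab_group_add \<Rightarrow> 'v set"
  assumes "vector_space sc"
    and "simple_VOA sc Y one \<omega>"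
    and "G_graded sc Y one \<omega> Vg"
    and "\<forall>g. Vg g \<noteq> {0}"
    and "\<forall>g h k. fusion_rule sc Y \<omega> (Vg 0) (Vg g) (Vg h) (Vg k) (if g + h = k then 1 else 0)"
    and "simple_VOA sc Ybar one \<omega>"
    and "\<forall>u\<in>Vg 0. Ybar u = Y u"
  shows "\<exists>\<phi>. VOA_iso sc Y one \<omega> Ybar one \<omega> \<phi>"
proof -
  interpret vs sc by (simp add: vs_def assms(1))
  show ?thesis by (rule main_iso[OF assms(2-7)])
qed

end
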